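(* Let $\mathcal X$ be a complex Banach space, $0<p,q<\infty$, $\tau\ge0$, $s\ge0$, and $(r_l)_{l\ge0}\subset[0,1)$ with $c2^{-l}\le1-r_l\le C2^{-l}$. If $f\in\mathcal A(\mathcal X)$ and $$\|f\|_3:=\sup_{I\in\mathcal D(\mathbb T)}\frac1{|I|^\tau}\Big(\int_I\Big[\sum_{l=\operatorname{rk}(I)}^\infty2^{slq}\|f(r_l\zeta_x)\|_{\mathcal X}^q\Big]^{p/q}dx\Big)^{1/p}<\infty,$$ then $f\equiv0$.
   Context: $\mathbb D$ unit disc, $\mathbb T$ unit circle, $\zeta_x=e^{2\pi ix}$, $dx$ normalized arc length, $|I|$ normalized length. $\mathcal A(\mathcal X)$: analytic functions $\mathbb D\to\mathcal X$. Dyadic arcs $\mathcal D(\mathbb T)$: images of $[2^{-j}k,2^{-j}(k+1))$, $j\ge0$, $0\le k<2^j$ (so $\mathbb T\in\mathcal D(\mathbb T)$); $\operatorname{rk}(I)=j$ when $|I|=2^{-j}$. *)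

theory Defs
  imports "HOL-Analysis.Analysis"
begin

class complex_vector = real_vector +
  fixes scaleC :: "complex \<Rightarrow> 'a \<Rightarrow> 'a" (infixr \<open>*\<^sub>C\<close> 75)
  assumes scaleR_scaleC: "scaleR r x = scaleC (complex_of_real r) x"
    and scaleC_add_right: "scaleC a (x + y) = scaleC a x + scaleC a y"
    and scaleC_add_left: "scaleC (a + b) x = scaleC a x + scaleC b x"
    and scaleC_scaleC: "scaleC a (scaleC b x) = scaleC (a * b) x"
    and scaleC_one: "scaleC 1 x = x"

class complex_normed_vector = complex_vector + real_normed_vector +
  assumes norm_scaleC: "norm (scaleC a x) = cmod a * norm x"

definition analytic_disc :: "(complex \<Rightarrow> 'a::{complex_normed_vector,banach}) \<Rightarrow> bool" where
  "analytic_disc f \<longleftrightarrow>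
     (\<forall>z\<in>ball (0::complex) 1. \<exists>D. (f has_derivative (\<lambda>h. h *\<^sub>C D)) (at z))"

definition enn_powr :: "ennreal \<Rightarrow> real \<Rightarrow> ennreal" where
  "enn_powr a t = (if a = \<infinity> then \<infinity> else ennreal (enn2real a powr t))"

definition zeta :: "real \<Rightarrow> complex" where
  "zeta x = exp (2 * of_real pi * \<i> * of_real x)"

text \<open>The quantity inside the supremum for the dyadic arc of rank j, index k,
  i.e. the image of [k/2^j, (k+1)/2^j):
  |I|^(-tau) * (int_I [sum_{l >= j} 2^(s l q) ||f(r_l zeta_x)||^q]^(p/q) dx)^(1/p).\<close>
definition norm3_arc ::
  "(complex \<Rightarrow> 'a::{complex_normed_vector,banach}) \<Rightarrow> (nat \<Rightarrow> real) \<Rightarrow> real \<Rightarrow> real \<Rightarrow> real \<Rightarrow> real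
     \<Rightarrow> nat \<Rightarrow> nat \<Rightarrow> ennreal" where
  "norm3_arc f r p q tau s j k =
     ennreal ((1 / 2 ^ j) powr (- tau)) *
     enn_powr
       (\<integral>\<^sup>+ x \<in> {real k / 2 ^ j ..< (real k + 1) / 2 ^ j}.
          enn_powr (\<Sum>l. if l \<ge> j then ennreal (2 powr (s * real l * q) * norm (f (of_real (r l) * zeta x)) powr q) else 0)
                   (p / q) \<partial>lborel)
       (1 / p)"

definition norm3 ::
  "(complex \<Rightarrow> 'a::{complex_normed_vector,banach}) \<Rightarrow> (nat \<Rightarrow> real) \<Rightarrow> real \<Rightarrow> real \<Rightarrow> real \<Rightarrow> real \<Rightarrow> ennreal" where
  "norm3 f r p q tau s = (SUP (j, k) \<in> {(j, k). k < 2 ^ j}. norm3_arc f r p q tau s j k)"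

end

theory Submission
  imports Defs "HOL-Complex_Analysis.Complex_Analysis" "HOL-Computational_Algebra.Polynomial"
begin



lemma mean_value_circle:
  fixes G :: "complex \<Rightarrow> complex"
  assumes "G holomorphic_on S" "open S" "cball 0 1 \<subseteq> S"
  shows "((\<lambda>x. G (zeta x)) has_integral G 0) {0..1}"
proof -
  have "G holomorphic_on cball 0 1" using assms holomorphic_on_subset by blast
  then have "((\<lambda>u. G u/(u-0)) has_contour_integral (2 * of_real pi * \<i> * G 0)) (circlepath 0 1)"
    by (intro Cauchy_integral_circlepath_simple) auto
  then have h: "((\<lambda>x. G (circlepath 0 1 x) / (circlepath 0 1 x) * vector_derivative (circlepath 0 1) (at x))
        has_integral (2 * of_real pi * \<i> * G 0)) {0..1}"
    unfolding has_contour_integral by simp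
  have "((\<lambda>x. (2 * of_real pi * \<i>) * G (zeta x)) has_integral (2 * of_real pi * \<i> * G 0)) {0..1}"
  proof (rule has_integral_spike_finite[OF _ _ h, where S="{}"])
    fix x assume "x \<in> {0..1::real} - {}"
    then show "(2 * of_real pi * \<i>) * G (zeta x) = G (circlepath 0 1 x) / (circlepath 0 1 x) * vector_derivative (circlepath 0 1) (at x)"
      by (subst vector_derivative_circlepath) (simp add: circlepath zeta_def)
  qed simp
  then have "((\<lambda>x. inverse (2 * of_real pi * \<i>) * ((2 * of_real pi * \<i>) * G (zeta x))) has_integral
     inverse (2 * of_real pi * \<i>) * (2 * of_real pi * \<i> * G 0)) {0..1}"
    by (rule has_integral_mult_right)
  moreover have "inverse (2 * of_real pi * \<i>) * (2 * of_real pi * \<i>) = (1::complex)"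
    by (simp add: field_simps)
  ultimately show ?thesis by (simp only: mult.assoc[symmetric]) simp
qed



lemma Re_cnj: "Re (cnj w) = Re w" by simp

lemma poly_conj_re:
  fixes Q :: "complex poly"
  shows "\<forall>P::complex poly. \<exists>R. \<forall>z. cmod z = 1 \<longrightarrow> Re (poly P z * cnj (poly Q z)) = Re (poly R z)"
proof (induction Q)
  case 0
  then show ?case by (auto intro: exI[of _ 0])
next
  case (pCons c Q')
  show ?case
  proof
    fix P :: "complex poly"
    obtain a P' where P: "P = pCons a P'" by (cases P) auto
    obtain R' where R': "\<And>z. cmod z = 1 \<Longrightarrow> Re (poly P' z * cnj (poly Q' z)) = Re (poly R' z)"
      using pCons.IH by blast
    show "\<exists>R. \<forall>z. cmod z = 1 \<longrightarrow> Re (poly P z * cnj (poly (pCons c Q') z)) = Re (poly R z)"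
    proof (intro exI[of _ "smult (cnj c) P + smult (cnj a) (pCons 0 Q') + R'"] allI impI)
      fix z :: complex assume z: "cmod z = 1"
      have zz: "z * cnj z = 1" using z by (simp add: complex_norm_square[symmetric])
      have h3: "a * (cnj z * cnj (poly Q' z)) = cnj (cnj a * (z * poly Q' z))" by simp
      have h1: "cnj (poly (pCons c Q') z) = cnj c + cnj z * cnj (poly Q' z)" by simp
      have h2: "poly P z = a + z * poly P' z" by (simp add: P)
      have "poly P z * cnj (poly (pCons c Q') z) = poly P z * cnj c + a * (cnj z * cnj (poly Q' z)) + poly P' z * cnj (poly Q' z) * (z * cnj z)"
        unfolding h1 h2 by algebra
      also have "\<dots> = poly P z * cnj c + cnj (cnj a * (z * poly Q' z)) + poly P' z * cnj (poly Q' z)"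
        by (simp only: zz mult_1_right h3)
      finally have E: "poly P z * cnj (poly (pCons c Q') z) = poly P z * cnj c + cnj (cnj a * (z * poly Q' z)) + poly P' z * cnj (poly Q' z)" .
      have "Re (poly P z * cnj (poly (pCons c Q') z)) = Re (poly P z * cnj c) + Re (cnj a * (z * poly Q' z)) + Re (poly P' z * cnj (poly Q' z))"
        using arg_cong[OF E, of Re] by (simp only: plus_complex.sel Re_cnj)
      also have "\<dots> = Re (poly (smult (cnj c) P + smult (cnj a) (pCons 0 Q') + R') z)"
        using R'[OF z] by (simp add: algebra_simps)
      finally show "Re (poly P z * cnj (poly (pCons c Q') z)) = Re (poly (smult (cnj c) P + smult (cnj a) (pCons 0 Q') + R') z)" .
    qed
  qed
qed

lemma real_poly_fun_circle:
  fixes w :: "complex \<Rightarrow> real"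
  assumes "real_polynomial_function w"
  shows "\<exists>P::complex poly. \<forall>z. cmod z = 1 \<longrightarrow> w z = Re (poly P z)"
  using assms
proof (induction w rule: real_polynomial_function.induct)
  case (linear w)
  then interpret bounded_linear w .
  show ?case
  proof (intro exI[of _ "[:0, complex_of_real (w 1) - \<i> * complex_of_real (w \<i>):]"] allI impI)
    fix z :: complex
    have "z = Re z *\<^sub>R 1 + Im z *\<^sub>R \<i>" by (simp add: complex_eq_iff)
    then have "w z = w (Re z *\<^sub>R 1 + Im z *\<^sub>R \<i>)" by simp
    also have "\<dots> = Re z * w 1 + Im z * w \<i>" by (simp add: add scale)
    finally show "w z = Re (poly [:0, complex_of_real (w 1) - \<i> * complex_of_real (w \<i>):] z)"
      by (simp add: algebra_simps)
  qed
next
  case (const c)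
  then show ?case by (intro exI[of _ "[:complex_of_real c:]"]) simp
next
  case (add f g)
  then obtain A B where "\<forall>z. cmod z = 1 \<longrightarrow> f z = Re (poly A z)" "\<forall>z. cmod z = 1 \<longrightarrow> g z = Re (poly B z)" by blast
  then show ?case by (intro exI[of _ "A + B"]) simp
next
  case (mult f g)
  then obtain A B where A: "\<forall>z. cmod z = 1 \<longrightarrow> f z = Re (poly A z)" and B: "\<forall>z. cmod z = 1 \<longrightarrow> g z = Re (poly B z)" by blast
  obtain R where R: "\<forall>z. cmod z = 1 \<longrightarrow> Re (poly A z * cnj (poly B z)) = Re (poly R z)"
    using poly_conj_re by blast
  show ?case
  proof (intro exI[of _ "smult (1/2) (A * B + R)"] allI impI)
    fix z :: complex assume z: "cmod z = 1"
    have "Re (poly A z) * Re (poly B z) = (Re (poly A z * poly B z) + Re (poly A z * cnj (poly B z))) / 2"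
      by (simp add: algebra_simps)
    moreover have "f z = Re (poly A z)" "g z = Re (poly B z)" "Re (poly A z * cnj (poly B z)) = Re (poly R z)"
      using A B R z by auto
    ultimately show "f z * g z = Re (poly (smult (1/2) (A * B + R)) z)"
      by simp
  qed
qed



lemma norm_zeta [simp]: "cmod (zeta x) = 1"
  by (simp add: zeta_def norm_exp_eq_Re)

lemma continuous_zeta: "continuous_on T zeta"
  unfolding zeta_def by (intro continuous_intros)

lemma submean_eps:
  fixes G :: "complex \<Rightarrow> complex"
  assumes holG: "G holomorphic_on S" and S: "open S" "cball 0 1 \<subseteq> S" and p: "p > 0" and e: "e > 0"
  shows "cmod (G 0) powr p \<le> exp (2*p*e) * (integral {0..1} (\<lambda>x. cmod (G (zeta x)) powr p) + e)"
proof -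
  define v where "v z = ln (cmod (G z) powr p + e) / p" for z
  have contG: "continuous_on S G" using holG holomorphic_on_imp_continuous_on by blast
  have sph: "sphere 0 1 \<subseteq> S" using S(2) by auto
  have c1: "continuous_on (sphere 0 1) (\<lambda>z. cmod (G z) powr p)"
    using continuous_on_subset[OF contG sph] p
    by (intro continuous_on_powr' continuous_intros) auto
  have c2: "continuous_on (sphere 0 1) (\<lambda>z. cmod (G z) powr p + e)"
    using c1 by (intro continuous_on_add continuous_on_const)
  have c3: "continuous_on (sphere 0 1) (\<lambda>z. ln (cmod (G z) powr p + e))"
    using e by (intro continuous_on_ln[OF c2]) (smt (verit) powr_ge_zero)
  have "continuous_on (sphere 0 1) v"
    unfolding v_def
    using p by (intro continuous_on_divide[OF c3 continuous_on_const]) auto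
  then obtain w where w: "real_polynomial_function w" "\<And>z. z \<in> sphere 0 1 \<Longrightarrow> \<bar>v z - w z\<bar> < e"
    by (rule Stone_Weierstrass_real_polynomial_function[OF compact_sphere _ e]) (auto intro: that)
  obtain P where P: "\<And>z. cmod z = 1 \<Longrightarrow> w z = Re (poly P z)"
    using real_poly_fun_circle[OF w(1)] by blast
  have wv: "\<bar>v z - Re (poly P z)\<bar> < e" if "cmod z = 1" for z
    using w(2)[of z] P[OF that] that by simp
  have Gle: "cmod (G z) \<le> exp (v z)" for z
  proof -
    have pos: "cmod (G z) powr p + e > 0" using e by (simp add: add_nonneg_pos)
    have "exp (v z) = (cmod (G z) powr p + e) powr (1/p)"
      using pos by (simp add: v_def powr_def)
    moreover have "cmod (G z) = (cmod (G z) powr p) powr (1/p)"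
      using p by (simp add: powr_powr)
    moreover have "(cmod (G z) powr p) powr (1/p) \<le> (cmod (G z) powr p + e) powr (1/p)"
      using p e by (intro powr_mono2) auto
    ultimately show ?thesis by simp
  qed
  define H where "H z = exp (- poly P z) * G z" for z
  have holH: "H holomorphic_on S" unfolding H_def
    by (intro holomorphic_intros holG)
  have intH: "((\<lambda>x. H (zeta x)) has_integral H 0) {0..1}"
    by (rule mean_value_circle[OF holH S])
  have "cmod (H 0) \<le> integral {0..1} (\<lambda>x::real. exp e)"
  proof -
    have "cmod (integral {0..1} (\<lambda>x. H (zeta x))) \<le> integral {0..1} (\<lambda>x::real. exp e)"
    proof (rule Henstock_Kurzweil_Integration.integral_norm_bound_integral)
      show "(\<lambda>x. H (zeta x)) integrable_on {0..1}" using intH by blast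
      show "(\<lambda>x::real. exp e) integrable_on {0..1::real}" by (intro integrable_continuous_real continuous_intros)
      fix x :: real
      have "cmod (H (zeta x)) = exp (- Re (poly P (zeta x))) * cmod (G (zeta x))"
        by (simp add: H_def norm_mult norm_exp_eq_Re)
      also have "\<dots> \<le> exp (- Re (poly P (zeta x))) * exp (v (zeta x))"
        by (intro mult_left_mono Gle) auto
      also have "\<dots> = exp (v (zeta x) - Re (poly P (zeta x)))" by (simp add: exp_add[symmetric])
      also have "\<dots> \<le> exp e" using wv[of "zeta x"] by simp
      finally show "cmod (H (zeta x)) \<le> exp e" .
    qed
    then show ?thesis using intH by (simp add: integral_unique)
  qed
  then have H0: "cmod (H 0) \<le> exp e" by simp
  have "G 0 = exp (poly P 0) * H 0" by (simp add: H_def exp_minus field_simps)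
  then have G0: "cmod (G 0) \<le> exp (Re (poly P 0)) * exp e"
    using H0 by (simp add: norm_mult norm_exp_eq_Re mult_left_mono)
  define E where "E z = exp (of_real p * poly P z)" for z
  have holE: "E holomorphic_on S" unfolding E_def by (intro holomorphic_intros)
  have intE: "((\<lambda>x. E (zeta x)) has_integral E 0) {0..1}"
    by (rule mean_value_circle[OF holE S])
  define I where "I = integral {0..1} (\<lambda>x. cmod (G (zeta x)) powr p)"
  have contI: "continuous_on {0..1} (\<lambda>x. cmod (G (zeta x)) powr p)"
  proof -
    have "continuous_on {0..1} (\<lambda>x. G (zeta x))"
      using continuous_on_subset[OF contG] sph
      by (intro continuous_on_compose2[OF _ continuous_zeta]) auto
    then show ?thesis using p by (intro continuous_on_powr' continuous_intros) auto
  qed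
  have intI: "((\<lambda>x. cmod (G (zeta x)) powr p) has_integral I) {0..1}"
    unfolding I_def using integrable_continuous_real[OF contI] by (simp add: integrable_integral)
  have "cmod (E 0) \<le> integral {0..1} (\<lambda>x. exp (p*e) * (cmod (G (zeta x)) powr p + e))"
  proof -
    have "cmod (integral {0..1} (\<lambda>x. E (zeta x))) \<le> integral {0..1} (\<lambda>x. exp (p*e) * (cmod (G (zeta x)) powr p + e))"
    proof (rule Henstock_Kurzweil_Integration.integral_norm_bound_integral)
      show "(\<lambda>x. E (zeta x)) integrable_on {0..1}" using intE by blast
      show "(\<lambda>x. exp (p*e) * (cmod (G (zeta x)) powr p + e)) integrable_on {0..1::real}"
        by (intro integrable_continuous_real continuous_on_mult[OF continuous_on_const continuous_on_add[OF contI continuous_on_const]])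
      fix x :: real
      have "cmod (E (zeta x)) = exp (p * Re (poly P (zeta x)))"
        by (simp add: E_def norm_exp_eq_Re)
      also have "\<dots> \<le> exp (p * (v (zeta x) + e))"
        using wv[of "zeta x"] p by simp
      also have "\<dots> = exp (p*e) * exp (p * v (zeta x))" by (simp add: exp_add[symmetric] algebra_simps)
      also have "exp (p * v (zeta x)) = cmod (G (zeta x)) powr p + e"
        using p e by (simp add: v_def add_nonneg_pos)
      finally show "cmod (E (zeta x)) \<le> exp (p*e) * (cmod (G (zeta x)) powr p + e)" .
    qed
    then show ?thesis using intE by (simp add: integral_unique)
  qed
  also have "\<dots> = exp (p*e) * (I + e)"
  proof -
    have cst: "((\<lambda>x::real. e) has_integral e) {0..1}" using has_integral_const_real[of e 0 1] by simp
    have "((\<lambda>x. exp (p*e) * (cmod (G (zeta x)) powr p + e)) has_integral exp (p*e) * (I + e)) {0..1}"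
      by (intro has_integral_mult_right has_integral_add intI cst)
    then show ?thesis by (rule integral_unique)
  qed
  finally have E0: "exp (p * Re (poly P 0)) \<le> exp (p*e) * (I + e)"
    by (simp add: E_def norm_exp_eq_Re)
  have "cmod (G 0) powr p \<le> (exp (Re (poly P 0)) * exp e) powr p"
    using G0 p by (intro powr_mono2) auto
  also have "\<dots> = exp (p * Re (poly P 0)) * exp (p*e)"
    by (simp add: exp_add[symmetric] exp_powr_real algebra_simps)
  also have "\<dots> \<le> exp (p*e) * (I + e) * exp (p*e)"
    using E0 by (intro mult_right_mono) auto
  also have "\<dots> = exp (2*p*e) * (I + e)"
    by (simp add: exp_add[symmetric] algebra_simps)
  finally show ?thesis unfolding I_def .
qed

lemma submean:
  fixes G :: "complex \<Rightarrow> complex"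
  assumes holG: "G holomorphic_on S" and S: "open S" "cball 0 1 \<subseteq> S" and p: "p > 0"
  shows "cmod (G 0) powr p \<le> integral {0..1} (\<lambda>x. cmod (G (zeta x)) powr p)"
proof -
  define I where "I = integral {0..1} (\<lambda>x. cmod (G (zeta x)) powr p)"
  have "((\<lambda>e. exp (2*p*e) * (I + e)) \<longlongrightarrow> exp (2*p*0) * (I + 0)) (at_right 0)"
    by (intro tendsto_intros)
  moreover have "eventually (\<lambda>e. cmod (G 0) powr p \<le> exp (2*p*e) * (I + e)) (at_right 0)"
    unfolding eventually_at_right_field I_def
    by (intro exI[of _ 1]) (auto intro: submean_eps[OF holG S p])
  ultimately have "cmod (G 0) powr p \<le> exp (2*p*0) * (I + 0)"
    by (intro tendsto_lowerbound) auto
  then show ?thesis by (simp add: I_def)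
qed



definition HBgraphs :: "'a::real_normed_vector \<Rightarrow> ('a \<times> real) set set" where
  "HBgraphs v = {G. (v, norm v) \<in> G \<and>
     (\<forall>x a b. (x,a)\<in>G \<longrightarrow> (x,b)\<in>G \<longrightarrow> a = b) \<and>
     (\<forall>x a y b. (x,a)\<in>G \<longrightarrow> (y,b)\<in>G \<longrightarrow> (x+y, a+b) \<in> G) \<and>
     (\<forall>x a c. (x,a)\<in>G \<longrightarrow> (c *\<^sub>R x, c*a) \<in> G) \<and>
     (\<forall>x a. (x,a)\<in>G \<longrightarrow> a \<le> norm x)}"

lemma HB_chain_bound:
  fixes v :: "'a::real_normed_vector"
  assumes v: "v \<noteq> 0" and C: "C \<in> chains (HBgraphs v)"
  shows "\<exists>U\<in>HBgraphs v. \<forall>X\<in>C. X \<subseteq> U"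
proof (cases "C = {}")
  case True
  define B where "B = {(t *\<^sub>R v, t * norm v) | t. True}"
  have "B \<in> HBgraphs v"
    unfolding HBgraphs_def
  proof (intro CollectI conjI allI impI)
    show "(v, norm v) \<in> B" unfolding B_def by (auto intro: exI[of _ 1])
  next
    fix x a b assume "(x,a) \<in> B" "(x,b) \<in> B"
    then obtain t t' where "x = t *\<^sub>R v" "a = t * norm v" "x = t' *\<^sub>R v" "b = t' * norm v"
      unfolding B_def by blast
    then have "t = t'" using v by (metis scaleR_cancel_right)
    then show "a = b" using \<open>a = _\<close> \<open>b = _\<close> by simp
  next
    fix x a y b assume "(x,a) \<in> B" "(y,b) \<in> B"
    then obtain t t' where "x = t *\<^sub>R v" "a = t * norm v" "y = t' *\<^sub>R v" "b = t' * norm v"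
      unfolding B_def by auto
    then show "(x+y, a+b) \<in> B" unfolding B_def
      by (auto intro!: exI[of _ "t+t'"] simp: scaleR_add_left distrib_right)
  next
    fix x a c assume "(x,a) \<in> B"
    then obtain t where "x = t *\<^sub>R v" "a = t * norm v" unfolding B_def by auto
    then show "(c *\<^sub>R x, c*a) \<in> B" unfolding B_def
      by (auto intro!: exI[of _ "c*t"])
  next
    fix x a assume "(x,a) \<in> B"
    then obtain t where "x = t *\<^sub>R v" "a = t * norm v" unfolding B_def by auto
    then show "a \<le> norm x" by (simp add: mult_right_mono)
  qed
  then show ?thesis using True by blast
next
  case False
  have CA: "C \<subseteq> HBgraphs v" and ch: "\<And>X Y. X \<in> C \<Longrightarrow> Y \<in> C \<Longrightarrow> X \<subseteq> Y \<or> Y \<subseteq> X"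
    using C unfolding chains_def chain_subset_def by auto
  have two: "\<exists>X\<in>C. p \<in> X \<and> p' \<in> X" if "p \<in> \<Union>C" "p' \<in> \<Union>C" for p p'
  proof -
    from that obtain X Y where "X \<in> C" "Y \<in> C" "p \<in> X" "p' \<in> Y" by auto
    then show ?thesis using ch[of X Y] by blast
  qed
  have "\<Union>C \<in> HBgraphs v"
    unfolding HBgraphs_def
  proof (intro CollectI conjI allI impI)
    obtain X where "X \<in> C" using False by blast
    then show "(v, norm v) \<in> \<Union>C" using CA unfolding HBgraphs_def by blast
  next
    fix x a b assume "(x,a) \<in> \<Union>C" "(x,b) \<in> \<Union>C"
    then obtain X where "X \<in> C" "(x,a) \<in> X" "(x,b) \<in> X" using two by blast
    then show "a = b" using CA unfolding HBgraphs_def by blast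
  next
    fix x a y b assume "(x,a) \<in> \<Union>C" "(y,b) \<in> \<Union>C"
    then obtain X where "X \<in> C" "(x,a) \<in> X" "(y,b) \<in> X" using two by blast
    then show "(x+y, a+b) \<in> \<Union>C" using CA unfolding HBgraphs_def by blast
  next
    fix x a c assume "(x,a) \<in> \<Union>C"
    then obtain X where "X \<in> C" "(x,a) \<in> X" by blast
    then show "(c *\<^sub>R x, c*a) \<in> \<Union>C" using CA unfolding HBgraphs_def by blast
  next
    fix x a assume "(x,a) \<in> \<Union>C"
    then obtain X where "X \<in> C" "(x,a) \<in> X" by blast
    then show "a \<le> norm x" using CA unfolding HBgraphs_def by blast
  qed
  then show ?thesis by blast
qed

lemma HB_extend:
  fixes v :: "'a::real_normed_vector"
  assumes M: "M \<in> HBgraphs v" and w: "\<And>a. (w, a) \<notin> M"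
  shows "\<exists>M'\<in>HBgraphs v. M \<subseteq> M' \<and> M' \<noteq> M"
proof -
  have fn1: "\<And>x a b. (x,a)\<in>M \<Longrightarrow> (x,b)\<in>M \<Longrightarrow> a = b"
   and add: "\<And>x a y b. (x,a)\<in>M \<Longrightarrow> (y,b)\<in>M \<Longrightarrow> (x+y, a+b) \<in> M"
   and sc: "\<And>x a c. (x,a)\<in>M \<Longrightarrow> (c *\<^sub>R x, c*a) \<in> M"
   and dom: "\<And>x a. (x,a)\<in>M \<Longrightarrow> a \<le> norm x"
   and vM: "(v, norm v) \<in> M"
    using M unfolding HBgraphs_def by auto
  have zero: "(0, 0) \<in> M" using sc[OF vM, of 0] by simp
  define L where "L = {a - norm (x - w) | x a. (x,a) \<in> M}"
  have key: "a - norm (x - w) \<le> norm (y + w) - b" if "(x,a) \<in> M" "(y,b) \<in> M" for x a y b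
  proof -
    have "a + b \<le> norm (x + y)" using dom[OF add[OF that]] .
    also have "\<dots> = norm ((x - w) + (y + w))" by simp
    also have "\<dots> \<le> norm (x - w) + norm (y + w)" by (rule norm_triangle_ineq)
    finally show ?thesis by simp
  qed
  have Lne: "L \<noteq> {}" using zero unfolding L_def by blast
  have Lbdd: "bdd_above L" unfolding L_def bdd_above_def
    using key[OF _ zero] by fastforce
  define c where "c = Sup L"
  have c_ge: "a - norm (x - w) \<le> c" if "(x,a) \<in> M" for x a
    unfolding c_def using that Lbdd by (intro cSup_upper) (auto simp: L_def)
  have c_le: "c \<le> norm (y + w) - b" if "(y,b) \<in> M" for y b
    unfolding c_def using Lne by (intro cSup_least) (auto simp: L_def intro: key[OF _ that])
  define M' where "M' = {(x + t *\<^sub>R w, a + t * c) | x a t. (x,a) \<in> M}"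
  have sub: "M \<subseteq> M'"
  proof
    fix p assume "p \<in> M"
    then obtain x a where xa: "p = (x,a)" "(x,a) \<in> M" by (cases p) auto
    have "(x,a) = (x + 0 *\<^sub>R w, a + 0*c)" by simp
    then show "p \<in> M'" unfolding M'_def using xa by blast
  qed
  have "(w, c) = (0 + 1 *\<^sub>R w, 0 + 1*c)" by simp
  then have wc: "(w, c) \<in> M'" unfolding M'_def using zero by blast
  have "M' \<in> HBgraphs v"
    unfolding HBgraphs_def
  proof (intro CollectI conjI allI impI)
    show "(v, norm v) \<in> M'" using sub vM by blast
  next
    fix x a b assume "(x,a) \<in> M'" "(x,b) \<in> M'"
    then obtain y1 a1 t1 y2 a2 t2 where h: "(y1,a1)\<in>M" "(y2,a2)\<in>M" "x = y1 + t1 *\<^sub>R w" "a = a1 + t1*c"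
       "x = y2 + t2 *\<^sub>R w" "b = a2 + t2*c"
      unfolding M'_def by blast
    have t: "t1 = t2"
    proof (rule ccontr)
      assume ne: "t1 \<noteq> t2"
      have "(y2 + (-1) *\<^sub>R y1, a2 + (-1)*a1) \<in> M" using add[OF h(2) sc[OF h(1)]] .
      then have "(y2 - y1, a2 - a1) \<in> M" by simp
      then have "((1/(t1-t2)) *\<^sub>R (y2 - y1), (1/(t1-t2)) * (a2 - a1)) \<in> M" by (rule sc)
      moreover have "(1/(t1-t2)) *\<^sub>R (y2 - y1) = w"
      proof -
        have "y2 - y1 = (t1 - t2) *\<^sub>R w" using h(3) h(5) by (simp add: algebra_simps)
        then show ?thesis using ne by simp
      qed
      ultimately show False using w by auto
    qed
    have "y1 + t1 *\<^sub>R w = y2 + t1 *\<^sub>R w" using h(3) h(5) t by simp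
    then have "y1 = y2" by (rule add_right_imp_eq)
    then have "a1 = a2" using fn1 h by blast
    then show "a = b" using h t by simp
  next
    fix x a y b assume "(x,a) \<in> M'" "(y,b) \<in> M'"
    then obtain x1 a1 t1 y1 b1 t2 where h: "(x1,a1)\<in>M" "(y1,b1)\<in>M" "x = x1 + t1 *\<^sub>R w" "a = a1 + t1*c"
       "y = y1 + t2 *\<^sub>R w" "b = b1 + t2*c"
      unfolding M'_def by blast
    have "(x+y, a+b) = ((x1+y1) + (t1+t2) *\<^sub>R w, (a1+b1) + (t1+t2)*c)"
      using h(3-6) by (simp add: algebra_simps scaleR_add_left)
    then show "(x+y, a+b) \<in> M'" unfolding M'_def using add[OF h(1,2)] by blast
  next
    fix x a k assume "(x,a) \<in> M'"
    then obtain x1 a1 t1 where h: "(x1,a1)\<in>M" "x = x1 + t1 *\<^sub>R w" "a = a1 + t1*c"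
      unfolding M'_def by blast
    have "(k *\<^sub>R x, k*a) = (k *\<^sub>R x1 + (k*t1) *\<^sub>R w, k*a1 + (k*t1)*c)"
      using h(2-3) by (simp add: algebra_simps scaleR_add_right)
    then show "(k *\<^sub>R x, k*a) \<in> M'" unfolding M'_def using sc[OF h(1), of k] by blast
  next
    fix x a assume "(x,a) \<in> M'"
    then obtain x1 a1 t where h: "(x1,a1)\<in>M" "x = x1 + t *\<^sub>R w" "a = a1 + t*c"
      unfolding M'_def by blast
    consider "t = 0" | "t > 0" | "t < 0" by linarith
    then show "a \<le> norm x"
    proof cases
      case 1 then show ?thesis using h dom by simp
    next
      case 2
      have "c \<le> norm ((1/t) *\<^sub>R x1 + w) - (1/t) * a1" using c_le[OF sc[OF h(1), of "1/t"]] .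
      then have "t * c \<le> t * (norm ((1/t) *\<^sub>R x1 + w) - (1/t) * a1)" using 2 by (simp add: mult_left_mono)
      also have "\<dots> = norm (t *\<^sub>R ((1/t) *\<^sub>R x1 + w)) - a1" using 2 by (simp add: right_diff_distrib)
      also have "t *\<^sub>R ((1/t) *\<^sub>R x1 + w) = x1 + t *\<^sub>R w" using 2 by (simp add: scaleR_add_right)
      finally show ?thesis using h by simp
    next
      case 3
      define u where "u = - t"
      have u: "u > 0" using 3 u_def by simp
      have A: "(1/u) * a1 - norm ((1/u) *\<^sub>R x1 - w) \<le> c" using c_ge[OF sc[OF h(1), of "1/u"]] .
      have B: "u * ((1/u) * a1 - norm ((1/u) *\<^sub>R x1 - w)) \<le> u * c"
        using A u by (intro mult_left_mono) auto
      have e1: "u *\<^sub>R ((1/u) *\<^sub>R x1 - w) = x1 - u *\<^sub>R w" using u by (simp add: scaleR_diff_right)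
      have e2: "u * norm ((1/u) *\<^sub>R x1 - w) = norm (x1 - u *\<^sub>R w)"
        using u by (simp flip: e1)
      have e3: "u * ((1/u) * a1 - norm ((1/u) *\<^sub>R x1 - w)) = a1 - norm (x1 - u *\<^sub>R w)"
        using u by (simp add: right_diff_distrib e2)
      have "a1 - norm (x1 - u *\<^sub>R w) \<le> u * c" using B e3 by simp
      moreover have "x1 - u *\<^sub>R w = x" using h(2) by (simp add: u_def)
      moreover have "a = a1 - u * c" using h(3) by (simp add: u_def)
      ultimately show ?thesis by simp
    qed
  qed
  moreover have "M' \<noteq> M" using wc w by blast
  ultimately show ?thesis using sub by blast
qed

lemma HB_real:
  fixes v :: "'a::real_normed_vector"
  assumes v: "v \<noteq> 0"
  shows "\<exists>\<psi>::'a\<Rightarrow>real. (\<forall>x y. \<psi> (x + y) = \<psi> x + \<psi> y) \<and> (\<forall>c x. \<psi> (c *\<^sub>R x) = c * \<psi> x)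
     \<and> (\<forall>x. \<psi> x \<le> norm x) \<and> \<psi> v = norm v"
proof -
  have "\<forall>C\<in>chains (HBgraphs v). \<exists>U\<in>HBgraphs v. \<forall>X\<in>C. X \<subseteq> U"
    using HB_chain_bound[OF v] by blast
  from Zorn_Lemma2[OF this] obtain M where M: "M \<in> HBgraphs v" and max0: "\<forall>X\<in>HBgraphs v. M \<subseteq> X \<longrightarrow> X = M"
    by blast
  have max: "\<And>X. X \<in> HBgraphs v \<Longrightarrow> M \<subseteq> X \<Longrightarrow> X = M" using max0 by blast
  have fn1: "\<And>x a b. (x,a)\<in>M \<Longrightarrow> (x,b)\<in>M \<Longrightarrow> a = b"
   and add: "\<And>x a y b. (x,a)\<in>M \<Longrightarrow> (y,b)\<in>M \<Longrightarrow> (x+y, a+b) \<in> M"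
   and sc: "\<And>x a c. (x,a)\<in>M \<Longrightarrow> (c *\<^sub>R x, c*a) \<in> M"
   and dom: "\<And>x a. (x,a)\<in>M \<Longrightarrow> a \<le> norm x"
   and vM: "(v, norm v) \<in> M"
    using M unfolding HBgraphs_def by auto
  have tot: "\<exists>a. (x, a) \<in> M" for x
  proof (rule ccontr)
    assume "\<nexists>a. (x, a) \<in> M"
    then obtain M' where "M' \<in> HBgraphs v" "M \<subseteq> M'" "M' \<noteq> M" using HB_extend[OF M] by blast
    then show False using max by blast
  qed
  define \<psi> where "\<psi> x = (THE a. (x, a) \<in> M)" for x
  have psi: "(x, \<psi> x) \<in> M" for x
  proof -
    obtain a where xa: "(x,a) \<in> M" using tot by blast
    then have "(THE a'. (x,a') \<in> M) = a" using fn1 by (intro the_equality) blast+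
    then show ?thesis using xa unfolding \<psi>_def by simp
  qed
  have eq: "\<psi> x = a" if "(x,a) \<in> M" for x a using fn1[OF psi that] .
  show ?thesis
  proof (intro exI[of _ \<psi>] conjI allI)
    show "\<psi> (x + y) = \<psi> x + \<psi> y" for x y using eq[OF add[OF psi psi]] .
    show "\<psi> (c *\<^sub>R x) = c * \<psi> x" for c x using eq[OF sc[OF psi]] .
    show "\<psi> x \<le> norm x" for x using dom[OF psi] .
    show "\<psi> v = norm v" using eq[OF vM] .
  qed
qed

lemma scaleC_zero_left': "scaleC 0 (x::'a::complex_vector) = 0"
  using scaleR_scaleC[of 0 x] by simp

lemma scaleC_minus1: "scaleC (-1) (x::'a::complex_vector) = - x"
proof -
  have "0 = scaleC (1 + -1) x" by (simp add: scaleC_zero_left')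
  also have "\<dots> = x + scaleC (-1) x" by (simp only: scaleC_add_left scaleC_one)
  finally show ?thesis by (simp add: eq_neg_iff_add_eq_0 add.commute)
qed

lemma scaleC_decomp: "c *\<^sub>C (x::'a::complex_vector) = Re c *\<^sub>R x + Im c *\<^sub>R (\<i> *\<^sub>C x)"
proof -
  have "c = complex_of_real (Re c) + complex_of_real (Im c) * \<i>" by (simp add: complex_eq_iff)
  then have "c *\<^sub>C x = (complex_of_real (Re c) + complex_of_real (Im c) * \<i>) *\<^sub>C x" by simp
  also have "\<dots> = Re c *\<^sub>R x + Im c *\<^sub>R (\<i> *\<^sub>C x)"
    by (simp add: scaleC_add_left scaleC_scaleC scaleR_scaleC)
  finally show ?thesis .
qed

lemma HB_complex:
  fixes v :: "'a::complex_normed_vector"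
  assumes v: "v \<noteq> 0"
  shows "\<exists>\<phi>::'a\<Rightarrow>complex. (\<forall>x y. \<phi> (x + y) = \<phi> x + \<phi> y) \<and> (\<forall>c x. \<phi> (c *\<^sub>C x) = c * \<phi> x)
     \<and> (\<forall>x. cmod (\<phi> x) \<le> norm x) \<and> \<phi> v \<noteq> 0"
proof -
  obtain \<psi> :: "'a \<Rightarrow> real" where add: "\<And>x y. \<psi> (x + y) = \<psi> x + \<psi> y"
    and sc: "\<And>c x. \<psi> (c *\<^sub>R x) = c * \<psi> x" and le: "\<And>x. \<psi> x \<le> norm x" and pv: "\<psi> v = norm v"
    using HB_real[OF v] by blast
  have neg: "\<psi> (- x) = - \<psi> x" for x using sc[of "-1" x] by simp
  define \<phi> where "\<phi> x = Complex (\<psi> x) (- \<psi> (\<i> *\<^sub>C x))" for x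
  have padd: "\<phi> (x + y) = \<phi> x + \<phi> y" for x y
    by (simp add: \<phi>_def scaleC_add_right add complex_eq_iff)
  have psc: "\<phi> (r *\<^sub>R x) = complex_of_real r * \<phi> x" for r x
  proof -
    have "\<i> *\<^sub>C (r *\<^sub>R x) = r *\<^sub>R (\<i> *\<^sub>C x)"
      by (simp add: scaleR_scaleC scaleC_scaleC mult.commute)
    then show ?thesis by (simp add: \<phi>_def sc complex_eq_iff)
  qed
  have pi: "\<phi> (\<i> *\<^sub>C x) = \<i> * \<phi> x" for x
  proof -
    have "\<i> *\<^sub>C (\<i> *\<^sub>C x) = - x" by (simp add: scaleC_scaleC scaleC_minus1)
    then show ?thesis by (simp add: \<phi>_def neg complex_eq_iff)
  qed
  have pc: "\<phi> (c *\<^sub>C x) = c * \<phi> x" for c x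
  proof -
    have "\<phi> (c *\<^sub>C x) = complex_of_real (Re c) * \<phi> x + complex_of_real (Im c) * (\<i> * \<phi> x)"
      by (subst scaleC_decomp) (simp only: padd psc pi)
    also have "\<dots> = (complex_of_real (Re c) + complex_of_real (Im c) * \<i>) * \<phi> x" by (simp add: algebra_simps)
    also have "complex_of_real (Re c) + complex_of_real (Im c) * \<i> = c" by (simp add: complex_eq_iff)
    finally show ?thesis .
  qed
  have bd: "cmod (\<phi> x) \<le> norm x" for x
  proof (cases "\<phi> x = 0")
    case True then show ?thesis by simp
  next
    case False
    define u where "u = cnj (\<phi> x) / complex_of_real (cmod (\<phi> x))"
    have "\<phi> (u *\<^sub>C x) = u * \<phi> x" by (rule pc)
    also have "\<dots> = (\<phi> x * cnj (\<phi> x)) / complex_of_real (cmod (\<phi> x))"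
      by (simp add: u_def mult.commute)
    also have "\<dots> = complex_of_real ((cmod (\<phi> x))^2) / complex_of_real (cmod (\<phi> x))"
      by (simp only: complex_norm_square)
    also have "\<dots> = complex_of_real (cmod (\<phi> x))"
      using False by (simp add: power2_eq_square)
    finally have "cmod (\<phi> x) = \<psi> (u *\<^sub>C x)" by (simp add: \<phi>_def complex_eq_iff)
    also have "\<dots> \<le> norm (u *\<^sub>C x)" by (rule le)
    also have "\<dots> = norm x" using False by (simp add: norm_scaleC u_def norm_divide)
    finally show ?thesis .
  qed
  have "\<phi> v \<noteq> 0" using pv v by (simp add: \<phi>_def complex_eq_iff)
  then show ?thesis using padd pc bd by blast
qed



lemma enn_powr_top [simp]: "enn_powr \<infinity> t = \<infinity>"
  by (simp add: enn_powr_def)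

lemma measurable_enn_powr [measurable]:
  assumes [measurable]: "F \<in> borel_measurable M"
  shows "(\<lambda>x. enn_powr (F x) t) \<in> borel_measurable M"
  unfolding enn_powr_def by measurable

lemma analytic_cont:
  fixes f :: "complex \<Rightarrow> 'a::{complex_normed_vector,banach}"
  assumes "analytic_disc f"
  shows "continuous_on (ball 0 1) f"
proof (rule continuous_at_imp_continuous_on, intro ballI)
  fix z :: complex assume "z \<in> ball 0 1"
  then obtain D where "(f has_derivative (\<lambda>h. h *\<^sub>C D)) (at z)"
    using assms unfolding analytic_disc_def by blast
  then show "isCont f z" by (rule has_derivative_continuous)
qed

lemma functional_holo:
  fixes f :: "complex \<Rightarrow> 'a::{complex_normed_vector,banach}" and \<phi> :: "'a \<Rightarrow> complex"
  assumes f: "analytic_disc f"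
    and add: "\<And>x y. \<phi> (x + y) = \<phi> x + \<phi> y" and sc: "\<And>c x. \<phi> (c *\<^sub>C x) = c * \<phi> x"
    and bd: "\<And>x. cmod (\<phi> x) \<le> norm x"
  shows "(\<lambda>z. \<phi> (f z)) holomorphic_on ball 0 1"
proof -
  have bl: "bounded_linear \<phi>"
  proof (rule bounded_linear_intro[where K=1])
    show "\<phi> (x + y) = \<phi> x + \<phi> y" for x y by (rule add)
    show "\<phi> (r *\<^sub>R x) = r *\<^sub>R \<phi> x" for r x
      by (simp add: scaleR_scaleC sc scaleR_conv_of_real)
    show "norm (\<phi> x) \<le> norm x * 1" for x using bd by simp
  qed
  show ?thesis
    unfolding holomorphic_on_def
  proof
    fix z :: complex assume "z \<in> ball 0 1"
    then obtain D where "(f has_derivative (\<lambda>h. h *\<^sub>C D)) (at z)"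
      using f unfolding analytic_disc_def by blast
    then have "((\<lambda>z. \<phi> (f z)) has_derivative (\<lambda>h. \<phi> (h *\<^sub>C D))) (at z)"
      by (rule bounded_linear.has_derivative[OF bl])
    moreover have "(\<lambda>h. \<phi> (h *\<^sub>C D)) = (*) (\<phi> D)"
      by (auto simp: sc mult.commute)
    ultimately have "((\<lambda>z. \<phi> (f z)) has_field_derivative \<phi> D) (at z)"
      by (simp add: has_field_derivative_def)
    then show "(\<lambda>z. \<phi> (f z)) field_differentiable at z within ball 0 1"
      using field_differentiable_at_within field_differentiable_def by blast
  qed
qed

lemma factor_zero:
  fixes g :: "complex \<Rightarrow> complex"
  assumes holg: "g holomorphic_on ball 0 1" and z0: "z0 \<in> ball 0 1" "g z0 \<noteq> 0"
  obtains n h where "h holomorphic_on ball 0 1" "h 0 \<noteq> 0" "\<And>z. z \<in> ball 0 1 \<Longrightarrow> g z = z^n * h z"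
proof (cases "g 0 = 0")
  case False
  show ?thesis by (rule that[of g 0]) (use holg False in auto)
next
  case True
  have nc: "\<not> g constant_on ball 0 1"
    using True z0 unfolding constant_on_def by (metis centre_in_ball zero_less_one)
  have z0': "(0::complex) \<in> ball 0 1" by simp
  show ?thesis
  proof (rule holomorphic_factor_zero_nonconstant[OF holg open_ball connected_ball z0' True nc])
  fix k :: "complex \<Rightarrow> complex" and \<rho> :: real and n :: nat
  assume n: "0 < n" and rho: "0 < \<rho>" "ball (0::complex) \<rho> \<subseteq> ball 0 1"
    and holk: "k holomorphic_on ball (0::complex) \<rho>"
    and gk: "\<And>w. w \<in> ball (0::complex) \<rho> \<Longrightarrow> g w = (w - 0)^n * k w"
    and knz: "\<And>w. w \<in> ball (0::complex) \<rho> \<Longrightarrow> k w \<noteq> 0"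
  define h where "h z = (if z = 0 then k 0 else g z / z^n)" for z
  have h1: "h holomorphic_on ball 0 \<rho>"
  proof (rule holomorphic_transform[OF holk])
    fix w :: complex assume w: "w \<in> ball 0 \<rho>"
    show "k w = h w"
    proof (cases "w = 0")
      case True then show ?thesis by (simp add: h_def)
    next
      case False then show ?thesis using gk[OF w] by (simp add: h_def)
    qed
  qed
  have h2: "h holomorphic_on (ball 0 1 - {0})"
  proof (rule holomorphic_transform[of "\<lambda>z. g z / z^n"])
    show "(\<lambda>z. g z / z ^ n) holomorphic_on ball 0 1 - {0}"
      by (intro holomorphic_intros holomorphic_on_subset[OF holg]) auto
  qed (simp add: h_def)
  have "h holomorphic_on (ball 0 \<rho> \<union> (ball 0 1 - {0}))"
    by (intro holomorphic_on_Un h1 h2 open_ball open_Diff) auto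
  moreover have "ball 0 \<rho> \<union> (ball 0 1 - {0}) = ball (0::complex) 1"
  proof
    show "ball (0::complex) \<rho> \<union> (ball 0 1 - {0}) \<subseteq> ball (0::complex) 1" by (rule Un_least[OF rho(2) Diff_subset])
    show "ball (0::complex) 1 \<subseteq> ball 0 \<rho> \<union> (ball 0 1 - {0})" using rho(1) by auto
  qed
  ultimately have "h holomorphic_on ball 0 1" by simp
  moreover have "h 0 \<noteq> 0" using knz[of 0] rho by (simp add: h_def)
  moreover have "g z = z^n * h z" if "z \<in> ball 0 1" for z
    using True n by (cases "z = 0") (auto simp: h_def)
  ultimately show ?thesis by (rule that)
  qed
qed

lemma circle_bound:
  fixes h :: "complex \<Rightarrow> complex"
  assumes holh: "h holomorphic_on ball 0 1" and rho: "0 < \<rho>" "\<rho> < 1" and p: "p > 0"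
  shows "cmod (h 0) powr p \<le> integral {0..1} (\<lambda>x. cmod (h (of_real \<rho> * zeta x)) powr p)"
proof -
  define G where "G w = h (of_real \<rho> * w)" for w
  have "G holomorphic_on ball 0 (1/\<rho>)"
  proof -
    have "(h \<circ> (\<lambda>w::complex. of_real \<rho> * w)) holomorphic_on ball 0 (1/\<rho>)"
    proof (rule holomorphic_on_compose_gen[OF _ holh])
      show "(\<lambda>w::complex. of_real \<rho> * w) holomorphic_on ball 0 (1/\<rho>)" by (intro holomorphic_intros)
      show "(\<lambda>w::complex. of_real \<rho> * w) ` ball 0 (1/\<rho>) \<subseteq> ball 0 1"
      proof
        fix y :: complex assume "y \<in> (\<lambda>w::complex. of_real \<rho> * w) ` ball 0 (1/\<rho>)"
        then obtain w :: complex where y: "y = of_real \<rho> * w" and w: "w \<in> ball 0 (1/\<rho>)" by blast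
        then have "norm w < 1/\<rho>" by simp
        then have "\<rho> * norm w < 1" using rho by (simp add: field_simps)
        then show "y \<in> ball (0::complex) 1" using rho y by (simp add: norm_mult)
      qed
    qed
    then show ?thesis by (simp add: G_def[abs_def] o_def)
  qed
  moreover have "cball (0::complex) 1 \<subseteq> ball 0 (1/\<rho>)"
  proof
    fix x :: complex assume "x \<in> cball 0 1"
    then have "norm x \<le> 1" by simp
    then have "\<rho> * norm x \<le> \<rho>" using rho by (simp add: mult_left_le)
    then have "\<rho> * norm x < 1" using rho by linarith
    then show "x \<in> ball 0 (1/\<rho>)" using rho by (simp add: field_simps)
  qed
  ultimately have "cmod (G 0) powr p \<le> integral {0..1} (\<lambda>x. cmod (G (zeta x)) powr p)"
    by (intro submean[OF _ open_ball _ p])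
  then show ?thesis by (simp add: G_def)
qed



theorem proposition11:
  fixes f :: "complex \<Rightarrow> 'a::{complex_normed_vector,banach}"
    and r :: "nat \<Rightarrow> real" and p q tau s c C :: real
  assumes "0 < p" "0 < q" "tau \<ge> 0" "s \<ge> 0"
    and "\<And>l. 0 \<le> r l \<and> r l < 1"
    and "0 < c"
    and "\<And>l. c * 2 powr (- real l) \<le> 1 - r l \<and> 1 - r l \<le> C * 2 powr (- real l)"
    and "analytic_disc f"
    and "norm3 f r p q tau s < \<infinity>"
  shows "\<forall>z\<in>ball 0 1. f z = 0"
proof (rule ccontr)
  note p = assms(1) and q = assms(2) and s = assms(4) and fan = assms(8) and fin3 = assms(9)
  have r0: "0 \<le> r l" and r1: "r l < 1" for l using assms(5) by auto
  have rC: "1 - r l \<le> C * 2 powr (- real l)" for l using assms(7) by auto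
  assume "\<not> (\<forall>z\<in>ball 0 1. f z = 0)"
  then obtain z0 where z0: "z0 \<in> ball 0 1" "f z0 \<noteq> 0" by blast
  obtain \<phi> :: "'a \<Rightarrow> complex" where padd: "\<And>x y. \<phi> (x + y) = \<phi> x + \<phi> y"
    and psc: "\<And>c x. \<phi> (c *\<^sub>C x) = c * \<phi> x" and pbd: "\<And>x. cmod (\<phi> x) \<le> norm x"
    and pz: "\<phi> (f z0) \<noteq> 0"
    using HB_complex[OF z0(2)] by blast
  define g where "g = (\<lambda>z. \<phi> (f z))"
  have holg: "g holomorphic_on ball 0 1"
    unfolding g_def by (rule functional_holo[OF fan padd psc pbd])
  obtain n h where holh: "h holomorphic_on ball 0 1" and h0: "h 0 \<noteq> 0"
    and gh: "\<And>z. z \<in> ball 0 1 \<Longrightarrow> g z = z^n * h z"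
    using factor_zero[OF holg z0(1)] pz unfolding g_def by blast

  have pw: "(\<lambda>l. 2 powr (- real l)) \<longlonglongrightarrow> 0"
  proof -
    have "2 powr (- real l) = (1/2::real)^l" for l
      by (simp add: powr_minus powr_realpow power_one_over inverse_eq_divide)
    moreover have "(\<lambda>l. (1/2::real)^l) \<longlonglongrightarrow> 0" by (rule LIMSEQ_power_zero) simp
    ultimately show ?thesis by simp
  qed
  have rlim: "r \<longlonglongrightarrow> 1"
  proof (rule tendsto_sandwich[of "\<lambda>l. 1 - C * 2 powr (- real l)" _ _ "\<lambda>l. 1"])
    show "\<forall>\<^sub>F l in sequentially. 1 - C * 2 powr (- real l) \<le> r l" using rC by (auto simp: algebra_simps)
    show "\<forall>\<^sub>F l in sequentially. r l \<le> 1" by (intro always_eventually allI less_imp_le r1)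
    show "(\<lambda>l. 1 - C * 2 powr (- real l)) \<longlonglongrightarrow> 1"
      using tendsto_diff[OF tendsto_const tendsto_mult[OF tendsto_const pw], of 1 C] by simp
  qed simp
  have rpos: "\<forall>\<^sub>F l in sequentially. 0 < r l"
    using order_tendstoD(1)[OF rlim, of 0] by simp

  define u where "u l x = norm (f (of_real (r l) * zeta x))" for l x
  define T where "T l x = 2 powr (s * real l * q) * u l x powr q" for l x
  define Sm where "Sm x = (\<Sum>l. ennreal (T l x))" for x
  define B where "B x = enn_powr (Sm x) (p/q) * indicator {0..<1} x" for x
  define U where "U l x = ennreal (u l x powr p) * indicator {0..1} x" for l x

  have contf: "continuous_on (ball 0 1) f" by (rule analytic_cont[OF fan])
  have inball: "of_real (r l) * zeta x \<in> ball 0 1" for l x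
    using r0[of l] r1[of l] by (simp add: norm_mult)
  have contfr: "continuous_on UNIV (\<lambda>x. f (of_real (r l) * zeta x))" for l
    by (rule continuous_on_compose2[OF contf continuous_on_mult[OF continuous_on_const continuous_zeta]])
       (use inball in auto)
  have contu: "continuous_on UNIV (u l)" for l
    unfolding u_def[abs_def] by (intro continuous_intros contfr)
  have contup: "continuous_on UNIV (\<lambda>x. u l x powr e)" if "e > 0" for l e
    using that by (intro continuous_on_powr' contu continuous_on_const) (auto simp: u_def)
  have measu: "(\<lambda>x. u l x powr e) \<in> borel_measurable lborel" if "e > 0" for l e
    using borel_measurable_continuous_onI[OF contup[OF that]] by simp
  have measT: "(\<lambda>x. ennreal (T l x)) \<in> borel_measurable lborel" for l
    unfolding T_def using measu[OF q, of l] by measurable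
  have measSm: "Sm \<in> borel_measurable lborel"
    unfolding Sm_def using measT by measurable
  have measB: "B \<in> borel_measurable lborel"
    unfolding B_def using measSm by measurable
  have measU: "U l \<in> borel_measurable lborel" for l
    unfolding U_def[abs_def] using measu[OF p, of l] by measurable

  have "norm3_arc f r p q tau s 0 0 \<le> norm3 f r p q tau s"
    unfolding norm3_def
    using SUP_upper[of "(0,0)" "{(j, k). k < (2::nat) ^ j}" "\<lambda>(j,k). norm3_arc f r p q tau s j k"] by simp
  moreover have "norm3_arc f r p q tau s 0 0 = enn_powr (\<integral>\<^sup>+x. B x \<partial>lborel) (1/p)"
    unfolding norm3_arc_def B_def Sm_def T_def u_def by simp
  ultimately have "enn_powr (\<integral>\<^sup>+x. B x \<partial>lborel) (1/p) < \<infinity>" using fin3 by simp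
  then have Bfin: "(\<integral>\<^sup>+x. B x \<partial>lborel) < \<infinity>"
    by (cases "(\<integral>\<^sup>+x. B x \<partial>lborel) = \<infinity>") (auto simp: less_top enn_powr_def)
  have AEB: "AE x in lborel. B x \<noteq> \<infinity>"
    by (rule nn_integral_PInf_AE[OF measB]) (use Bfin in simp)

  have Tnn: "0 \<le> T l x" for l x by (simp add: T_def)
  have uqT: "u l x powr q \<le> T l x" for l x
  proof -
    have "1 \<le> 2 powr (s * real l * q)" using s q by (intro ge_one_powr_ge_zero) auto
    then have "1 * u l x powr q \<le> 2 powr (s * real l * q) * u l x powr q"
      by (intro mult_right_mono) auto
    then show ?thesis by (simp add: T_def)
  qed
  have upq: "u l x powr p = (u l x powr q) powr (p/q)" for l x
    using q by (simp add: powr_powr)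

  have bound: "ennreal (u l x powr p) \<le> enn_powr (Sm x) (p/q)" for l x
  proof (cases "Sm x = \<infinity>")
    case True then show ?thesis by (simp add: enn_powr_def)
  next
    case False
    have summ: "summable (\<lambda>l. T l x)"
      using False Tnn by (intro summable_suminf_not_top) (auto simp: Sm_def)
    have Sx: "Sm x = ennreal (\<Sum>l. T l x)"
      using False Tnn by (simp add: Sm_def suminf_ennreal2[OF _ summ])
    have "T l x \<le> (\<Sum>l. T l x)"
      using sum_le_suminf[OF summ, of "{l}"] Tnn by simp
    then have "u l x powr q \<le> (\<Sum>l. T l x)" using uqT[of l x] by linarith
    then have "u l x powr p \<le> (\<Sum>l. T l x) powr (p/q)"
      unfolding upq using p q by (intro powr_mono2) auto
    moreover have "enn_powr (Sm x) (p/q) = ennreal ((\<Sum>l. T l x) powr (p/q))"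
      using Tnn summ by (simp add: Sx enn_powr_def suminf_nonneg)
    ultimately show ?thesis by (simp add: ennreal_leI)
  qed

  have conv0: "(\<lambda>l. u l x powr p) \<longlonglongrightarrow> 0" if "Sm x \<noteq> \<infinity>" for x
  proof -
    have summ: "summable (\<lambda>l. T l x)"
      using that Tnn by (intro summable_suminf_not_top) (auto simp: Sm_def)
    have "(\<lambda>l. T l x) \<longlonglongrightarrow> 0" by (rule summable_LIMSEQ_zero[OF summ])
    then have uq0: "(\<lambda>l. u l x powr q) \<longlonglongrightarrow> 0"
      by (rule tendsto_sandwich[rotated 2, OF tendsto_const]) (auto intro!: always_eventually uqT)
    have "(\<lambda>l. (u l x powr q) powr (p/q)) \<longlonglongrightarrow> 0"
      by (rule tendsto_zero_powrI[OF uq0 tendsto_const]) (use p q in \<open>auto intro!: always_eventually\<close>)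
    then show ?thesis by (simp add: upq)
  qed

  have Ulim: "(\<lambda>l. \<integral>\<^sup>+x. U l x \<partial>lborel) \<longlonglongrightarrow> (\<integral>\<^sup>+x. (0::ennreal) \<partial>(lborel::real measure))"
  proof (rule nn_integral_dominated_convergence[where w=B and u=U and u'="\<lambda>x. 0" and M=lborel])
    show "U l \<in> borel_measurable lborel" for l by (rule measU)
    show "(\<lambda>x. 0::ennreal) \<in> borel_measurable lborel" by simp
    show "B \<in> borel_measurable lborel" by (rule measB)
    show "(\<integral>\<^sup>+x. B x \<partial>lborel) < \<infinity>" by (rule Bfin)
    show "AE x in lborel. U l x \<le> B x" for l
      using AE_lborel_singleton[of 1]
    proof eventually_elim
      case (elim x)
      show ?case
      proof (cases "x \<in> {0..<1}")
        case True
        then show ?thesis using bound[of l x] by (simp add: U_def B_def)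
      next
        case False
        then have "x \<notin> {0..1}" using elim by auto
        then show ?thesis by (simp add: U_def)
      qed
    qed
    show "AE x in lborel. (\<lambda>l. U l x) \<longlonglongrightarrow> 0"
      using AE_lborel_singleton[of 1] AEB
    proof eventually_elim
      case (elim x)
      show ?case
      proof (cases "x \<in> {0..<1}")
        case True
        then have "Sm x \<noteq> \<infinity>" using elim(2) by (auto simp: B_def enn_powr_def)
        then have "(\<lambda>l. ennreal (u l x powr p)) \<longlonglongrightarrow> ennreal 0"
          by (intro tendsto_ennrealI conv0)
        moreover have "x \<in> {0..1}" using True by auto
        ultimately show ?thesis by (simp add: U_def)
      next
        case False
        then have "x \<notin> {0..1}" using elim by auto
        then show ?thesis by (simp add: U_def)
      qed
    qed
  qed
  then have Ulim0: "(\<lambda>l. \<integral>\<^sup>+x. U l x \<partial>lborel) \<longlonglongrightarrow> 0" by simp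

  have Uint: "(\<integral>\<^sup>+x. U l x \<partial>lborel) = ennreal (integral {0..1} (\<lambda>x. u l x powr p))" for l
  proof -
    have "(\<lambda>x. u l x powr p) integrable_on {0..1}"
      by (rule integrable_continuous_real[OF continuous_on_subset[OF contup[OF p]]]) auto
    then have "((\<lambda>x. u l x powr p) has_integral integral {0..1} (\<lambda>x. u l x powr p)) {0..1}"
      by (rule integrable_integral)
    then show ?thesis unfolding U_def
      by (intro nn_integral_has_integral_lebesgue') auto
  qed

  define a where "a = cmod (h 0) powr p"
  have apos: "a > 0" using h0 by (simp add: a_def)
  have lower: "(r l ^ n) powr p * a \<le> integral {0..1} (\<lambda>x. u l x powr p)" if rl: "0 < r l" for l
  proof -
    define \<rho> where "\<rho> = r l"
    have rho: "0 < \<rho>" "\<rho> < 1" using rl r1[of l] by (auto simp: \<rho>_def)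
    have cb: "a \<le> integral {0..1} (\<lambda>x. cmod (h (of_real \<rho> * zeta x)) powr p)"
      unfolding a_def by (rule circle_bound[OF holh rho p])
    have conth: "continuous_on {0..1} (\<lambda>x. cmod (h (of_real \<rho> * zeta x)) powr p)"
    proof -
      have "continuous_on {0..1} (\<lambda>x. h (of_real \<rho> * zeta x))"
        by (rule continuous_on_compose2[OF holomorphic_on_imp_continuous_on[OF holh]
              continuous_on_mult[OF continuous_on_const continuous_zeta]])
           (use inball in \<open>auto simp: \<rho>_def\<close>)
      then show ?thesis using p by (intro continuous_on_powr' continuous_intros) auto
    qed
    have i1: "((\<lambda>x. cmod (h (of_real \<rho> * zeta x)) powr p) has_integral
               integral {0..1} (\<lambda>x. cmod (h (of_real \<rho> * zeta x)) powr p)) {0..1}"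
      by (rule integrable_integral[OF integrable_continuous_real[OF conth]])
    have i2: "((\<lambda>x. (\<rho> ^ n) powr p * cmod (h (of_real \<rho> * zeta x)) powr p) has_integral
               (\<rho> ^ n) powr p * integral {0..1} (\<lambda>x. cmod (h (of_real \<rho> * zeta x)) powr p)) {0..1}"
      by (rule has_integral_mult_right[OF i1])
    have i3: "((\<lambda>x. u l x powr p) has_integral integral {0..1} (\<lambda>x. u l x powr p)) {0..1}"
      by (rule integrable_integral[OF integrable_continuous_real[OF continuous_on_subset[OF contup[OF p]]]]) auto
    have pt: "(\<rho> ^ n) powr p * cmod (h (of_real \<rho> * zeta x)) powr p \<le> u l x powr p" for x
    proof -
      have "(\<rho> ^ n) powr p * cmod (h (of_real \<rho> * zeta x)) powr p = (\<rho> ^ n * cmod (h (of_real \<rho> * zeta x))) powr p"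
        using rho by (simp add: powr_mult)
      also have "\<rho> ^ n * cmod (h (of_real \<rho> * zeta x)) = cmod (g (of_real \<rho> * zeta x))"
        using gh[OF inball[of l x]] rho by (simp add: \<rho>_def norm_mult norm_power)
      also have "cmod (g (of_real \<rho> * zeta x)) \<le> u l x"
        by (simp add: g_def u_def \<rho>_def pbd)
      then have "cmod (g (of_real \<rho> * zeta x)) powr p \<le> u l x powr p"
        using p by (intro powr_mono2) auto
      finally show ?thesis .
    qed
    have "(\<rho> ^ n) powr p * a \<le> (\<rho> ^ n) powr p * integral {0..1} (\<lambda>x. cmod (h (of_real \<rho> * zeta x)) powr p)"
      using cb by (intro mult_left_mono) auto
    also have "\<dots> \<le> integral {0..1} (\<lambda>x. u l x powr p)"
      using has_integral_le[OF i2 i3] pt by auto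
    finally show ?thesis by (simp add: \<rho>_def)
  qed

  have L1: "(\<lambda>l. ennreal ((r l ^ n) powr p * a)) \<longlonglongrightarrow> ennreal ((1 ^ n) powr p * a)"
    by (intro tendsto_ennrealI tendsto_intros rlim) simp
  have ev: "\<forall>\<^sub>F l in sequentially. ennreal ((r l ^ n) powr p * a) \<le> (\<integral>\<^sup>+x. U l x \<partial>lborel)"
    using rpos by eventually_elim (simp add: Uint ennreal_leI lower)
  have "ennreal ((1 ^ n) powr p * a) \<le> 0"
    by (rule tendsto_le[OF _ Ulim0 L1 ev]) simp
  then show False using apos by simp
qed


end
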